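(* Let $G=(V,E)$ be a finite simple graph and $T\geq1$ an integer. If $(x,y,z)$ is a feasible solution of the Time Step Model $\mathrm{TSM}(G,T)$, then $C=\{v\in V\colon x^0_v=1\}$ is a zero forcing set of $G$ that is the initial set of some zero forcing game in $\mathcal{Z}(G,T)$, and $\mathrm{pt}(G,C)=\sum_{t\in[T]}z^t$.
   Context: Zero forcing: $n=|V|$, $N(u)$ is the neighborhood of $u$, $d(u)=|N(u)|$. Under the standard color change rule, a filled vertex $u$ can force a non-filled vertex $v$ if $v$ is the only non-filled neighbor of $u$. A zero forcing game on $G$ with initial set $C\subseteq V$ consists of sets $C^{(0)}=C^{[0]}=C$, sets $C^{(t)}$ (vertices forced at step $t$) with $C^{[t]}=C^{[t-1]}\cup C^{(t)}$, and a collection $\phi(C)$ of forces $u\to v$, such that every vertex lies in exactly one $C^{(t)}$, and each $v\in C^{(t)}$, $t\geq1$, is forced by exactly one neighbor $u$ such that $u$ and all neighbors of $u$ other than $v$ lie in $C^{[t-1]}$. $C$ is a zero forcing set if repeated forcing eventually fills all of $V$. The propagation time $\mathrm{pt}(G,C)$ is the smallest $t^*$ with $C^{[t^*]}=V$ when at each step all possible forces are applied simultaneously, i.e. $C^{(t)}$ is the set of all $v\notin C^{[t-1]}$ for which some $u\in C^{[t-1]}$ has $v$ as its unique neighbor outside $C^{[t-1]}$ ($\mathrm{pt}(G,C)=\infty$ if $C$ is not a zero forcing set). Here $\mathcal{Z}(G,T)$ denotes the family of zero forcing games on $G$ whose initial set is a zero forcing set, which use at most $T$ time steps, and in which at each time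 step all possible forces are applied (in the sense just described). Time Step Model: $A$ is the set of arcs containing $(u,v)$ and $(v,u)$ for each edge $\{u,v\}$, $[T]=\{1,\dots,T\}$. $\mathrm{TSM}(G,T)$ has binary variables $x^t_v$ ($v\in V$, $t\in\{0,\dots,T\}$), $y^t_a$ ($a\in A$, $t\in[T]$), $z^t$ ($t\in[T]$), with constraints: (1) $x^0_v+\sum_{t\in[T]}\sum_{a=(u,v)\in A}y^t_a=1$ for all $v$; (2) $y^t_a\leq x^{t-1}_u$ for all $a=(u,v)\in A$, $t\in[T]$; (3) $y^t_a\leq x^{t-1}_w$ for all $a=(u,v)\in A$, $w\in N(u)\setminus\{v\}$, $t\in[T]$; (4) $x^t_v=x^{t-1}_v+\sum_{a=(u,v)\in A}y^t_a$ for all $v$, $t\in[T]$; (5) $x^{t-1}_u-x^{t-1}_v+\sum_{w\in N(u)\setminus\{v\}}x^{t-1}_w\leq\sum_{a=(w,v)\in A}y^t_a+d(u)-1$ for all $(u,v)\in A$, $t\in[T]$; (6) $\frac1n\sum_{v\in V}(x^t_v-x^{t-1}_v)-z^t\leq0$ for all $t\in[T]$; (7) $z^t-\sum_{v\in V}(x^t_v-x^{t-1}_v)\leq 0$ for all $t\in[T]$. Its objective is to minimize $\sum_v x^0_v$. A feasible solution is one satisfying all constraints. *)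

theory Defs
  imports Main "HOL-Library.Extended_Nat"
begin

definition simple_graph :: "'a set \<Rightarrow> ('a \<Rightarrow> 'a \<Rightarrow> bool) \<Rightarrow> bool" where
  "simple_graph V E \<longleftrightarrow> finite V \<and> (\<forall>u v. E u v \<longrightarrow> u \<in> V \<and> v \<in> V)
     \<and> (\<forall>u v. E u v \<longrightarrow> E v u) \<and> (\<forall>u. \<not> E u u)"

definition nbhd :: "'a set \<Rightarrow> ('a \<Rightarrow> 'a \<Rightarrow> bool) \<Rightarrow> 'a \<Rightarrow> 'a set" where
  "nbhd V E u = {w \<in> V. E u w}"

definition deg :: "'a set \<Rightarrow> ('a \<Rightarrow> 'a \<Rightarrow> bool) \<Rightarrow> 'a \<Rightarrow> nat" where
  "deg V E u = card (nbhd V E u)"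

definition force_step :: "'a set \<Rightarrow> ('a \<Rightarrow> 'a \<Rightarrow> bool) \<Rightarrow> 'a set \<Rightarrow> 'a set" where
  "force_step V E S = {v \<in> V. v \<notin> S \<and> (\<exists>u\<in>S. nbhd V E u - S = {v})}"

definition filled :: "'a set \<Rightarrow> ('a \<Rightarrow> 'a \<Rightarrow> bool) \<Rightarrow> 'a set \<Rightarrow> nat \<Rightarrow> 'a set" where
  "filled V E C t = ((\<lambda>S. S \<union> force_step V E S) ^^ t) C"

definition zero_forcing_set :: "'a set \<Rightarrow> ('a \<Rightarrow> 'a \<Rightarrow> bool) \<Rightarrow> 'a set \<Rightarrow> bool" where
  "zero_forcing_set V E C \<longleftrightarrow> C \<subseteq> V \<and> (\<exists>t. filled V E C t = V)"

definition pt :: "'a set \<Rightarrow> ('a \<Rightarrow> 'a \<Rightarrow> bool) \<Rightarrow> 'a set \<Rightarrow> enat" where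
  "pt V E C = (if zero_forcing_set V E C then enat (LEAST t. filled V E C t = V) else \<infinity>)"

text \<open>A zero forcing game with initial set C, given by the sets Cs t (= C^(t))
  and the collection of forces phi (pairs (u,v) meaning u forces v).
  Cb t is C^[t], the union of Cs s for s \<le> t.\<close>
definition Cb :: "(nat \<Rightarrow> 'a set) \<Rightarrow> nat \<Rightarrow> 'a set" where
  "Cb Cs t = (\<Union>s\<le>t. Cs s)"

definition zf_game :: "'a set \<Rightarrow> ('a \<Rightarrow> 'a \<Rightarrow> bool) \<Rightarrow> 'a set \<Rightarrow> (nat \<Rightarrow> 'a set) \<Rightarrow> ('a \<times> 'a) set \<Rightarrow> bool" where
  "zf_game V E C Cs phi \<longleftrightarrow>
     C \<subseteq> V \<and> Cs 0 = C \<and> (\<forall>t. Cs t \<subseteq> V) \<and>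
     (\<forall>v\<in>V. \<exists>!t. v \<in> Cs t) \<and>
     (\<forall>(u,v)\<in>phi. \<exists>t\<ge>1. v \<in> Cs t) \<and>
     (\<forall>t\<ge>1. \<forall>v\<in>Cs t. \<exists>!u. (u,v) \<in> phi \<and> E u v \<and>
          u \<in> Cb Cs (t-1) \<and> nbhd V E u - {v} \<subseteq> Cb Cs (t-1))"

definition zf_games_Z :: "'a set \<Rightarrow> ('a \<Rightarrow> 'a \<Rightarrow> bool) \<Rightarrow> nat \<Rightarrow> ('a set \<times> (nat \<Rightarrow> 'a set) \<times> ('a \<times> 'a) set) set" where
  "zf_games_Z V E T = {(C, Cs, phi). zf_game V E C Cs phi \<and> zero_forcing_set V E C \<and>
      Cb Cs T = V \<and>
      (\<forall>t\<ge>1. Cs t = force_step V E (Cb Cs (t-1)))}"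

text \<open>The sum over arcs (u,v) entering v is the sum over u in N(v).\<close>
definition TSM_feasible :: "'a set \<Rightarrow> ('a \<Rightarrow> 'a \<Rightarrow> bool) \<Rightarrow> nat \<Rightarrow>
    ('a \<Rightarrow> nat \<Rightarrow> real) \<Rightarrow> ('a \<Rightarrow> 'a \<Rightarrow> nat \<Rightarrow> real) \<Rightarrow> (nat \<Rightarrow> real) \<Rightarrow> bool" where
  "TSM_feasible V E T x y z \<longleftrightarrow>
    (\<forall>v\<in>V. \<forall>t\<in>{0..T}. x v t \<in> {0,1}) \<and>
    (\<forall>u\<in>V. \<forall>v\<in>V. E u v \<longrightarrow> (\<forall>t\<in>{1..T}. y u v t \<in> {0,1})) \<and>
    (\<forall>t\<in>{1..T}. z t \<in> {0,1}) \<and>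
    \<comment> \<open>(1)\<close>
    (\<forall>v\<in>V. x v 0 + (\<Sum>t\<in>{1..T}. \<Sum>u\<in>nbhd V E v. y u v t) = 1) \<and>
    \<comment> \<open>(2)\<close>
    (\<forall>u\<in>V. \<forall>v\<in>V. E u v \<longrightarrow> (\<forall>t\<in>{1..T}. y u v t \<le> x u (t-1))) \<and>
    \<comment> \<open>(3)\<close>
    (\<forall>u\<in>V. \<forall>v\<in>V. E u v \<longrightarrow> (\<forall>w\<in>nbhd V E u - {v}. \<forall>t\<in>{1..T}. y u v t \<le> x w (t-1))) \<and>
    \<comment> \<open>(4)\<close>
    (\<forall>v\<in>V. \<forall>t\<in>{1..T}. x v t = x v (t-1) + (\<Sum>u\<in>nbhd V E v. y u v t)) \<and>
    \<comment> \<open>(5)\<close>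
    (\<forall>u\<in>V. \<forall>v\<in>V. E u v \<longrightarrow> (\<forall>t\<in>{1..T}.
        x u (t-1) - x v (t-1) + (\<Sum>w\<in>nbhd V E u - {v}. x w (t-1))
          \<le> (\<Sum>w\<in>nbhd V E v. y w v t) + real (deg V E u) - 1)) \<and>
    \<comment> \<open>(6)\<close>
    (\<forall>t\<in>{1..T}. (1 / real (card V)) * (\<Sum>v\<in>V. x v t - x v (t-1)) - z t \<le> 0) \<and>
    \<comment> \<open>(7)\<close>
    (\<forall>t\<in>{1..T}. z t - (\<Sum>v\<in>V. x v t - x v (t-1)) \<le> 0)"

end

theory Submission
  imports Defs
begin

lemma F_0: "filled V E C 0 = C" by (simp add: filled_def)
lemma F_Suc: "filled V E C (Suc t) = filled V E C t \<union> force_step V E (filled V E C t)"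
  by (simp add: filled_def)

lemma F_mono: "s \<le> t \<Longrightarrow> filled V E C s \<subseteq> filled V E C t"
proof (induction t)
  case 0 then show ?case by simp
next
  case (Suc t) then show ?case by (auto simp: F_Suc le_Suc_eq)
qed

lemma fs_sub: "force_step V E S \<subseteq> V" by (auto simp: force_step_def)
lemma fs_V: "force_step V E V = {}" by (auto simp: force_step_def)

lemma F_sub: "C \<subseteq> V \<Longrightarrow> filled V E C t \<subseteq> V"
  by (induction t) (auto simp: F_0 F_Suc force_step_def)

lemma F_stable: "filled V E C (Suc t) = filled V E C t \<Longrightarrow> filled V E C (t + j) = filled V E C t"
  by (induction j) (simp_all add: F_Suc)

lemma sum_ind: "k \<le> T \<Longrightarrow> (\<Sum>t\<in>{1..T}. if t \<le> k then 1 else 0 :: real) = real k"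
proof -
  assume "k \<le> T"
  have "(\<Sum>t\<in>{1..T}. if t \<le> k then 1 else 0 :: real) = (\<Sum>t\<in>{t\<in>{1..T}. t \<le> k}. 1)"
    by (simp only: sum.inter_filter[OF finite_atLeastAtMost])
  also have "{t\<in>{1..T}. t \<le> k} = {1..k}" using \<open>k \<le> T\<close> by auto
  finally show ?thesis by simp
qed

locale tsm =
  fixes V :: "'a set" and E :: "'a \<Rightarrow> 'a \<Rightarrow> bool" and T :: nat
    and x :: "'a \<Rightarrow> nat \<Rightarrow> real" and y :: "'a \<Rightarrow> 'a \<Rightarrow> nat \<Rightarrow> real" and z :: "nat \<Rightarrow> real"
  assumes G: "simple_graph V E" and T1: "T \<ge> 1" and Feas: "TSM_feasible V E T x y z"
begin

lemma finV: "finite V" using G by (simp add: simple_graph_def)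
lemma symE: "E u v \<Longrightarrow> E v u" using G by (simp add: simple_graph_def)
lemma EV: "E u v \<Longrightarrow> u \<in> V \<and> v \<in> V" using G by (simp add: simple_graph_def)
lemma finN: "finite (nbhd V E u)" using finV by (simp add: nbhd_def)
lemma nbhdI: "E u v \<Longrightarrow> v \<in> nbhd V E u" using EV by (simp add: nbhd_def)
lemma nbhdD: "w \<in> nbhd V E u \<Longrightarrow> E u w \<and> w \<in> V" by (simp add: nbhd_def)

lemmas FDall = Feas[unfolded TSM_feasible_def]
lemmas FD = FDall[THEN conjunct1] FDall[THEN conjunct2, THEN conjunct1] FDall[THEN conjunct2, THEN conjunct2, THEN conjunct1] FDall[THEN conjunct2, THEN conjunct2, THEN conjunct2, THEN conjunct1] FDall[THEN conjunct2, THEN conjunct2, THEN conjunct2, THEN conjunct2, THEN conjunct1] FDall[THEN conjunct2, THEN conjunct2, THEN conjunct2, THEN conjunct2, THEN conjunct2, THEN conjunct1] FDall[THEN conjunct2, THEN conjunct2, THEN conjunct2, THEN conjunct2, THEN conjunct2, THEN conjunct2, THEN conjunct1] FDall[THEN conjunct2, THEN conjunct2, THEN conjunct2, THEN conjunct2, THEN conjunct2, THEN conjunct2, THEN conjunct2, THEN conjunct1] FDall[THEN conjunct2, THEN conjunct2, THEN conjunct2, THEN conjunct2, THEN conjunct2, THEN conjunct2, THEN conjunct2, THEN conjunct2, THEN conjunct1] FDall[THEN conjunct2, THEN conjunct2, THEN conjunct2, THEN conjunct2, THEN conjunct2, THEN conjunct2, THEN conjunct2, THEN conjunct2, THEN 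conjunct2]

lemma x01: "v \<in> V \<Longrightarrow> t \<le> T \<Longrightarrow> x v t = 0 \<or> x v t = 1"
  using FD(1) by auto
lemma y01: "E u v \<Longrightarrow> 1 \<le> t \<Longrightarrow> t \<le> T \<Longrightarrow> y u v t = 0 \<or> y u v t = 1"
proof -
  assume a: "E u v" "1 \<le> t" "t \<le> T"
  have "u \<in> V" "v \<in> V" using EV[OF a(1)] by auto
  then show ?thesis using FD(2) a by auto
qed
lemma z01: "1 \<le> t \<Longrightarrow> t \<le> T \<Longrightarrow> z t = 0 \<or> z t = 1"
  using FD(3) by auto
lemma c1: "v \<in> V \<Longrightarrow> x v 0 + (\<Sum>t\<in>{1..T}. \<Sum>u\<in>nbhd V E v. y u v t) = 1"
  using FD(4) by blast
lemma c2: "E u v \<Longrightarrow> 1 \<le> t \<Longrightarrow> t \<le> T \<Longrightarrow> y u v t \<le> x u (t-1)"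
proof -
  assume a: "E u v" "1 \<le> t" "t \<le> T"
  have "u \<in> V" "v \<in> V" using EV[OF a(1)] by auto
  then show ?thesis using FD(5) a by auto
qed
lemma c3: "E u v \<Longrightarrow> w \<in> nbhd V E u - {v} \<Longrightarrow> 1 \<le> t \<Longrightarrow> t \<le> T \<Longrightarrow> y u v t \<le> x w (t-1)"
proof -
  assume a: "E u v" "w \<in> nbhd V E u - {v}" "1 \<le> t" "t \<le> T"
  have "u \<in> V" "v \<in> V" using EV[OF a(1)] by auto
  then show ?thesis using FD(6) a by auto
qed
lemma c4: "v \<in> V \<Longrightarrow> 1 \<le> t \<Longrightarrow> t \<le> T \<Longrightarrow> x v t = x v (t-1) + (\<Sum>u\<in>nbhd V E v. y u v t)"
  using FD(7) by auto
lemma c5: "E u v \<Longrightarrow> 1 \<le> t \<Longrightarrow> t \<le> T \<Longrightarrow>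
   x u (t-1) - x v (t-1) + (\<Sum>w\<in>nbhd V E u - {v}. x w (t-1))
          \<le> (\<Sum>w\<in>nbhd V E v. y w v t) + real (deg V E u) - 1"
proof -
  assume a: "E u v" "1 \<le> t" "t \<le> T"
  have "u \<in> V" "v \<in> V" using EV[OF a(1)] by auto
  then show ?thesis using FD(8) a by auto
qed
lemma c6: "1 \<le> t \<Longrightarrow> t \<le> T \<Longrightarrow> (1 / real (card V)) * (\<Sum>v\<in>V. x v t - x v (t-1)) - z t \<le> 0"
  using FD(9) by auto
lemma c7: "1 \<le> t \<Longrightarrow> t \<le> T \<Longrightarrow> z t - (\<Sum>v\<in>V. x v t - x v (t-1)) \<le> 0"
  using FD(10) by auto

lemma inflow_nn: "v \<in> V \<Longrightarrow> 1 \<le> t \<Longrightarrow> t \<le> T \<Longrightarrow> 0 \<le> (\<Sum>u\<in>nbhd V E v. y u v t)"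
proof (rule sum_nonneg)
  fix u assume "v \<in> V" "1 \<le> t" "t \<le> T" "u \<in> nbhd V E v"
  then have "E u v" using nbhdD symE by blast
  then show "0 \<le> y u v t" using y01 \<open>1 \<le> t\<close> \<open>t \<le> T\<close> by fastforce
qed

lemma xmono: "v \<in> V \<Longrightarrow> 1 \<le> t \<Longrightarrow> t \<le> T \<Longrightarrow> x v (t-1) \<le> x v t"
  using c4 inflow_nn by fastforce

definition X where "X t = {v \<in> V. x v t = 1}"

lemma Xmono1: "1 \<le> t \<Longrightarrow> t \<le> T \<Longrightarrow> X (t-1) \<subseteq> X t"
proof
  fix v assume a: "1 \<le> t" "t \<le> T" "v \<in> X (t-1)"
  then have "v \<in> V" "x v (t-1) = 1" by (auto simp: X_def)
  moreover have "x v (t-1) \<le> x v t" using xmono a \<open>v \<in> V\<close> by blast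
  moreover have "x v t = 0 \<or> x v t = 1" using x01 \<open>v \<in> V\<close> a by blast
  ultimately show "v \<in> X t" by (auto simp: X_def)
qed

lemma X_step_sub: "1 \<le> t \<Longrightarrow> t \<le> T \<Longrightarrow> X t \<subseteq> X (t-1) \<union> force_step V E (X (t-1))"
proof
  fix v assume a: "1 \<le> t" "t \<le> T" "v \<in> X t"
  then have vV: "v \<in> V" and xt: "x v t = 1" by (auto simp: X_def)
  show "v \<in> X (t-1) \<union> force_step V E (X (t-1))"
  proof (cases "x v (t-1) = 1")
    case True then show ?thesis using vV by (auto simp: X_def)
  next
    case False
    then have x0: "x v (t-1) = 0" using x01[OF vV, of "t-1"] a by linarith
    have s1: "(\<Sum>u\<in>nbhd V E v. y u v t) = 1" using c4[OF vV a(1,2)] xt x0 by simp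
    have "\<exists>u\<in>nbhd V E v. y u v t \<noteq> 0"
    proof (rule ccontr)
      assume "\<not> ?thesis"
      then have "(\<Sum>u\<in>nbhd V E v. y u v t) = 0" by simp
      then show False using s1 by simp
    qed
    then obtain u where u: "u \<in> nbhd V E v" "y u v t \<noteq> 0" by blast
    have Euv: "E u v" using u nbhdD symE by blast
    have y1: "y u v t = 1" using y01[OF Euv a(1,2)] u by simp
    have uV: "u \<in> V" using EV Euv by blast
    have xu: "x u (t-1) = 1" using c2[OF Euv a(1,2)] y1 x01[OF uV, of "t-1"] a by linarith
    have xw: "x w (t-1) = 1" if "w \<in> nbhd V E u - {v}" for w
    proof -
      have "w \<in> V" using that nbhdD by blast
      then show ?thesis using c3[OF Euv that a(1,2)] y1 x01[of w "t-1"] a by fastforce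
    qed
    have "nbhd V E u - X (t-1) = {v}"
    proof
      show "nbhd V E u - X (t - 1) \<subseteq> {v}"
        using xw nbhdD by (auto simp: X_def)
      show "{v} \<subseteq> nbhd V E u - X (t - 1)"
        using nbhdI[OF Euv] x0 by (auto simp: X_def)
    qed
    moreover have "u \<in> X (t-1)" using uV xu by (simp add: X_def)
    moreover have "v \<notin> X (t-1)" using x0 by (simp add: X_def)
    ultimately show ?thesis using vV unfolding force_step_def by blast
  qed
qed

lemma X_step_sup: "1 \<le> t \<Longrightarrow> t \<le> T \<Longrightarrow> force_step V E (X (t-1)) \<subseteq> X t"
proof
  fix v assume a: "1 \<le> t" "t \<le> T" "v \<in> force_step V E (X (t-1))"
  then obtain u where vV: "v \<in> V" and vn: "v \<notin> X (t-1)" and u: "u \<in> X (t-1)"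
     and N: "nbhd V E u - X (t-1) = {v}"
    unfolding force_step_def by blast
  have uV: "u \<in> V" and xu: "x u (t-1) = 1" using u by (auto simp: X_def)
  have x0: "x v (t-1) = 0" using vn vV x01[OF vV, of "t-1"] a by (auto simp: X_def)
  have vN: "v \<in> nbhd V E u" using N by blast
  have Euv: "E u v" using vN nbhdD by blast
  have xw: "x w (t-1) = 1" if "w \<in> nbhd V E u - {v}" for w
    using that N by (auto simp: X_def nbhd_def)
  have S: "(\<Sum>w\<in>nbhd V E u - {v}. x w (t-1)) = real (card (nbhd V E u - {v}))"
    using xw by simp
  have D: "deg V E u = Suc (card (nbhd V E u - {v}))"
    unfolding deg_def using card.remove[OF finN vN] .
  have "1 \<le> (\<Sum>w\<in>nbhd V E v. y w v t)"
    using c5[OF Euv a(1,2)] xu x0 S D by simp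
  then have "1 \<le> x v t" using c4[OF vV a(1,2)] x0 by simp
  then have "x v t = 1" using x01[OF vV a(2)] by auto
  then show "v \<in> X t" using vV by (simp add: X_def)
qed

lemma X_step: "1 \<le> t \<Longrightarrow> t \<le> T \<Longrightarrow> X t = X (t-1) \<union> force_step V E (X (t-1))"
  using X_step_sub X_step_sup Xmono1 by blast

lemma X_F: "t \<le> T \<Longrightarrow> X t = filled V E (X 0) t"
proof (induction t)
  case 0 then show ?case by (simp add: F_0)
next
  case (Suc t)
  have h1: "X (Suc t) = X (Suc t - 1) \<union> force_step V E (X (Suc t - 1))"
    by (rule X_step) (use Suc.prems in auto)
  then have h1': "X (Suc t) = X t \<union> force_step V E (X t)" by (simp only: diff_Suc_1)
  have h2: "X t = filled V E (X 0) t" by (rule Suc.IH) (use Suc.prems in simp)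
  show ?case unfolding F_Suc h1' h2 by (rule refl)
qed

lemma tele: "v \<in> V \<Longrightarrow> t \<le> T \<Longrightarrow> x v t = x v 0 + (\<Sum>s\<in>{1..t}. \<Sum>u\<in>nbhd V E v. y u v s)"
proof (induction t)
  case 0 then show ?case by simp
next
  case (Suc t)
  then show ?case using c4[of v "Suc t"] by (simp add: sum.cl_ivl_Suc)
qed

lemma XT: "X T = V"
proof -
  have "x v T = 1" if "v \<in> V" for v
    using tele[OF that order_refl] c1[OF that] by simp
  then show ?thesis unfolding X_def by blast
qed

lemma X0V: "X 0 \<subseteq> V" by (auto simp: X_def)

abbreviation "FF t \<equiv> filled V E (X 0) t"

lemma FT: "FF T = V" using XT X_F[of T] by simp

lemma zf: "zero_forcing_set V E (X 0)"
  unfolding zero_forcing_set_def using X0V FT by blast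

definition k where "k = (LEAST t. FF t = V)"

lemma k_le: "k \<le> T" unfolding k_def by (rule Least_le) (rule FT)
lemma Fk: "FF k = V" unfolding k_def by (rule LeastI[of _ T]) (rule FT)

lemma zval: "1 \<le> t \<Longrightarrow> t \<le> T \<Longrightarrow> z t = (if X t = X (t-1) then 0 else 1)"
proof -
  assume a: "1 \<le> t" "t \<le> T"
  show ?thesis
  proof (cases "X t = X (t-1)")
    case True
    have "x v t - x v (t-1) = 0" if "v \<in> V" for v
    proof -
      have "x v t = 0 \<or> x v t = 1" "x v (t-1) = 0 \<or> x v (t-1) = 1"
        using x01 that a by auto
      moreover have "(x v t = 1) = (x v (t-1) = 1)"
      proof -
        have "(v \<in> X t) = (v \<in> X (t-1))" using True by simp
        then show ?thesis using that by (simp add: X_def)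
      qed
      ultimately show ?thesis by auto
    qed
    then have "(\<Sum>v\<in>V. x v t - x v (t-1)) = 0" by simp
    then have "z t \<le> 0" using c7[OF a] by simp
    then show ?thesis using z01[OF a] True by auto
  next
    case False
    then obtain v where v: "v \<in> X t" "v \<notin> X (t-1)" using Xmono1[OF a] by blast
    then have vV: "v \<in> V" and "x v t = 1" by (auto simp: X_def)
    moreover have "x v (t-1) = 0" using v vV x01[OF vV, of "t-1"] a by (auto simp: X_def)
    ultimately
    have "1 \<le> x v t - x v (t-1)" by simp
    also have "\<dots> \<le> (\<Sum>v\<in>V. x v t - x v (t-1))"
    proof (rule member_le_sum)
      show "v \<in> V" by (rule vV)
      show "finite V" by (rule finV)
      fix w assume "w \<in> V - {v}"
      then have "w \<in> V" by blast
      then show "0 \<le> x w t - x w (t-1)" using xmono[OF _ a] by fastforce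
    qed
    finally have d: "1 \<le> (\<Sum>v\<in>V. x v t - x v (t-1))" .
    have "card V > 0" using vV finV card_gt_0_iff by blast
    then have "0 < 1 / real (card V)" by simp
    then have "0 < (1 / real (card V)) * (\<Sum>v\<in>V. x v t - x v (t-1))"
      by (rule mult_pos_pos) (use d in linarith)
    then have "0 < z t" using c6[OF a] by simp
    then show ?thesis using z01[OF a] False by auto
  qed
qed

lemma change: "1 \<le> t \<Longrightarrow> t \<le> T \<Longrightarrow> (X t \<noteq> X (t-1)) = (t \<le> k)"
proof -
  assume a: "1 \<le> t" "t \<le> T"
  have Xt: "X t = FF t" "X (t-1) = FF (t-1)" by (rule X_F, use a in simp)+
  show ?thesis
  proof
    assume "X t \<noteq> X (t-1)"
    show "t \<le> k"
    proof (rule ccontr)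
      assume "\<not> t \<le> k"
      then have "k \<le> t-1" "k \<le> t" by auto
      then have "V \<subseteq> FF (t-1)" "V \<subseteq> FF t"
        using F_mono[of k "t-1" V E "X 0"] F_mono[of k t V E "X 0"] Fk by auto
      moreover have "FF t \<subseteq> V" "FF (t-1) \<subseteq> V" using F_sub[OF X0V] by auto
      ultimately show False using \<open>X t \<noteq> X (t-1)\<close> Xt by auto
    qed
  next
    assume "t \<le> k"
    show "X t \<noteq> X (t-1)"
    proof
      assume "X t = X (t-1)"
      then have "FF t = FF (t-1)" using Xt by simp
      then have "FF (Suc (t-1)) = FF (t-1)" using a by simp
      from F_stable[OF this, of "T - (t-1)"] have "FF T = FF (t-1)" using a by simp
      then have "FF (t-1) = V" using FT by simp
      then have "k \<le> t-1" unfolding k_def by (rule Least_le)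
      then show False using \<open>t \<le> k\<close> a by simp
    qed
  qed
qed

lemma zsum: "(\<Sum>t\<in>{1..T}. z t) = real k"
proof -
  have "(\<Sum>t\<in>{1..T}. z t) = (\<Sum>t\<in>{1..T}. if t \<le> k then 1 else 0)"
  proof (rule sum.cong)
    fix t assume "t \<in> {1..T}"
    then have a: "1 \<le> t" "t \<le> T" by auto
    show "z t = (if t \<le> k then 1 else 0)" using zval[OF a] change[OF a] by argo
  qed simp
  then show ?thesis using sum_ind k_le by simp
qed

lemma ptk: "pt V E (X 0) = enat k"
  using zf unfolding pt_def k_def by simp

definition Cs where "Cs t = (if t = 0 then X 0 else force_step V E (FF (t-1)))"

lemma Cb_F: "Cb Cs t = FF t"
proof (induction t)
  case 0 then show ?case by (simp add: Cb_def Cs_def F_0)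
next
  case (Suc t)
  have h1: "Cb Cs (Suc t) = Cb Cs t \<union> Cs (Suc t)" by (auto simp: Cb_def atMost_Suc)
  have h2: "Cs (Suc t) = force_step V E (FF t)" by (simp add: Cs_def)
  show ?case unfolding h1 h2 Suc.IH F_Suc by (rule refl)
qed

lemma Cs_F: "v \<in> Cs t \<Longrightarrow> v \<in> FF t"
  using Cb_F[of t] by (auto simp: Cb_def)

lemma Cs_notF: "1 \<le> t \<Longrightarrow> v \<in> Cs t \<Longrightarrow> v \<notin> FF (t-1)"
  by (auto simp: Cs_def force_step_def)

lemma Cs_lt: "v \<in> Cs t \<Longrightarrow> v \<in> Cs t' \<Longrightarrow> t < t' \<Longrightarrow> False"
proof -
  assume a: "v \<in> Cs t" "v \<in> Cs t'" "t < t'"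
  have "t \<le> t'-1" using a(3) by simp
  then have "v \<in> FF (t'-1)" using F_mono[of t "t'-1" V E "X 0"] Cs_F[OF a(1)] by blast
  then show False using Cs_notF[OF _ a(2)] a(3) by simp
qed

lemma Cs_uniq: "v \<in> Cs t \<Longrightarrow> v \<in> Cs t' \<Longrightarrow> t = t'"
  using Cs_lt by (metis linorder_neqE_nat)

lemma Cs_V: "Cs t \<subseteq> V"
  using X0V fs_sub[of V E "FF (t-1)"] by (auto simp: Cs_def)

lemma Cs_ex: "v \<in> V \<Longrightarrow> \<exists>t. v \<in> Cs t"
proof -
  assume vV: "v \<in> V"
  have "v \<in> FF T" using XT X_F[of T] vV by simp
  define m where "m = (LEAST t. v \<in> FF t)"
  have vm: "v \<in> FF m" unfolding m_def by (rule LeastI) fact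
  show ?thesis
  proof (cases m)
    case 0 then show ?thesis using vm by (auto simp: Cs_def F_0)
  next
    case (Suc m')
    have "v \<notin> FF m'" using not_less_Least[of m' "\<lambda>t. v \<in> FF t"] Suc m_def by simp
    then have "v \<in> Cs (Suc m')" using vm Suc by (simp add: Cs_def F_Suc)
    then show ?thesis by blast
  qed
qed

definition fr where "fr t v = (SOME u. u \<in> FF (t-1) \<and> nbhd V E u - FF (t-1) = {v})"
definition phi where "phi = {(u,v). \<exists>t\<ge>1. v \<in> Cs t \<and> u = fr t v}"

lemma fr_prop: "1 \<le> t \<Longrightarrow> v \<in> Cs t \<Longrightarrow> fr t v \<in> FF (t-1) \<and> nbhd V E (fr t v) - FF (t-1) = {v}"
proof -
  assume a: "1 \<le> t" "v \<in> Cs t"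
  then have "\<exists>u. u \<in> FF (t-1) \<and> nbhd V E u - FF (t-1) = {v}"
    by (auto simp: Cs_def force_step_def)
  then show ?thesis unfolding fr_def by (rule someI_ex)
qed

lemma game: "zf_game V E (X 0) Cs phi"
  unfolding zf_game_def
proof (intro conjI)
  show "X 0 \<subseteq> V" by (rule X0V)
  show "Cs 0 = X 0" by (simp add: Cs_def)
  show "\<forall>t. Cs t \<subseteq> V" using Cs_V by blast
  show "\<forall>v\<in>V. \<exists>!t. v \<in> Cs t" using Cs_ex Cs_uniq by blast
  show "\<forall>(u, v)\<in>phi. \<exists>t\<ge>1. v \<in> Cs t" by (auto simp: phi_def)
  show "\<forall>t\<ge>1. \<forall>v\<in>Cs t. \<exists>!u. (u, v) \<in> phi \<and> E u v \<and> u \<in> Cb Cs (t - 1) \<and>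
          nbhd V E u - {v} \<subseteq> Cb Cs (t - 1)"
  proof (intro allI impI ballI)
    fix t v assume t: "1 \<le> t" and v: "v \<in> Cs t"
    note P = fr_prop[OF t v]
    show "\<exists>!u. (u, v) \<in> phi \<and> E u v \<and> u \<in> Cb Cs (t - 1) \<and> nbhd V E u - {v} \<subseteq> Cb Cs (t - 1)"
    proof (rule ex1I[of _ "fr t v"])
      have "v \<in> nbhd V E (fr t v)" using P by blast
      then have "E (fr t v) v" using nbhdD by blast
      moreover have "(fr t v, v) \<in> phi" using t v by (auto simp: phi_def)
      moreover have "nbhd V E (fr t v) - {v} \<subseteq> FF (t-1)" using P by blast
      ultimately show "(fr t v, v) \<in> phi \<and> E (fr t v) v \<and> fr t v \<in> Cb Cs (t - 1) \<and>
          nbhd V E (fr t v) - {v} \<subseteq> Cb Cs (t - 1)" using P by (simp add: Cb_F)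
    next
      fix u assume "(u, v) \<in> phi \<and> E u v \<and> u \<in> Cb Cs (t - 1) \<and> nbhd V E u - {v} \<subseteq> Cb Cs (t - 1)"
      then obtain t' where "v \<in> Cs t'" "u = fr t' v" by (auto simp: phi_def)
      then show "u = fr t v" using Cs_uniq v by blast
    qed
  qed
qed

lemma inZ: "(X 0, Cs, phi) \<in> zf_games_Z V E T"
  unfolding zf_games_Z_def
proof (simp only: mem_Collect_eq case_prod_conv, intro conjI)
  show "zf_game V E (X 0) Cs phi" by (rule game)
  show "zero_forcing_set V E (X 0)" by (rule zf)
  show "Cb Cs T = V" using Cb_F XT X_F[of T] by simp
  show "\<forall>t\<ge>1. Cs t = force_step V E (Cb Cs (t - 1))"
    by (simp add: Cs_def Cb_F)
qed

end

theorem theorem4p2: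
  fixes V :: "'a set" and E :: "'a \<Rightarrow> 'a \<Rightarrow> bool" and T :: nat
    and x :: "'a \<Rightarrow> nat \<Rightarrow> real" and y :: "'a \<Rightarrow> 'a \<Rightarrow> nat \<Rightarrow> real" and z :: "nat \<Rightarrow> real"
  assumes "simple_graph V E" and "T \<ge> 1" and "TSM_feasible V E T x y z"
  defines "C \<equiv> {v \<in> V. x v 0 = 1}"
  shows "zero_forcing_set V E C
    \<and> (\<exists>Cs phi. (C, Cs, phi) \<in> zf_games_Z V E T)
    \<and> (\<exists>k. pt V E C = enat k \<and> real k = (\<Sum>t\<in>{1..T}. z t))"
proof -
  interpret tsm V E T x y z using assms(1-3) by unfold_locales
  have C: "C = X 0" by (simp add: C_def X_def)
  have "\<exists>Cs phi. (X 0, Cs, phi) \<in> zf_games_Z V E T" using inZ by blast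
  moreover have "\<exists>k. pt V E (X 0) = enat k \<and> real k = (\<Sum>t\<in>{1..T}. z t)"
    using ptk zsum by simp
  ultimately show ?thesis unfolding C using zf by blast
qed

end
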